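(* Let $x\in(1,\infty)$, $y\in S^1=\mathbf{R}/2\pi\mathbf{Z}$, and let $dA=\frac{1}{|x|}\,dx\,dy$. Consider the operator $$\Delta_{ex}=\partial_x^2+x^2\partial_y^2-\frac{1}{x}\partial_x+\frac{(x^4+1)^2}{4x^2(x^4-1)}$$ with domain $C^\infty_0((1,\infty)\times S^1)$. Then $\Delta_{ex}$ is not essentially self-adjoint in $L^2((1,\infty)\times S^1,dA)$.
   Context: The Grushin cylinder is $\mathbf{R}\times S^1$ with the (generalized) Riemannian metric $\mathrm{diag}(1,1/x^2)$ in coordinates $(x,y)$; its Riemannian area is $dA=\frac{1}{|x|}dx\,dy$, its Laplace–Beltrami operator (divergence w.r.t. $dA$ of the gradient) is $\Delta=\partial_x^2+x^2\partial_y^2-\frac1x\partial_x$, and its Gaussian curvature is $K=-2/x^2$. For $x\ge 1$ the half-cylinder is isometrically embedded in $\mathbf{R}^3$ as the surface of revolution $z_1=\frac1x\cos y$, $z_2=\frac1x\sin y$, $z_3=1+\int_1^x\sqrt{1-s^{-4}}\,ds$, whose mean curvature is $H=\frac{x^4-3}{2x\sqrt{x^4-1}}$. The extrinsic Laplacian is $\Delta_{ex}=\Delta-K+H^2$, which equals the displayed operator. *)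

theory Defs
  imports "HOL-Analysis.Analysis"
begin

text \<open>Functions on the half-cylinder, written in coordinates (x,y) in R x R;
  the circle variable y is taken mod 2 pi (test functions are 2 pi-periodic in y,
  and the L2 space is realised on (1,inf) x [0, 2 pi)).\<close>

type_synonym cfun = "real \<times> real \<Rightarrow> complex"

definition pdx :: "cfun \<Rightarrow> cfun" where
  "pdx f = (\<lambda>(x, y). vector_derivative (\<lambda>t. f (t, y)) (at x))"

definition pdy :: "cfun \<Rightarrow> cfun" where
  "pdy f = (\<lambda>(x, y). vector_derivative (\<lambda>t. f (x, t)) (at y))"

fun iter_partials :: "nat \<Rightarrow> cfun \<Rightarrow> cfun set" where
  "iter_partials 0 f = {f}"
| "iter_partials (Suc n) f = (\<Union>g\<in>iter_partials n f. {pdx g, pdy g})"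

definition smooth2 :: "cfun \<Rightarrow> bool" where
  "smooth2 f \<longleftrightarrow> (\<forall>n. \<forall>g\<in>iter_partials n f.
      continuous_on UNIV g \<and>
      (\<forall>x y. (\<lambda>t. g (t, y)) differentiable (at x) \<and> (\<lambda>t. g (x, t)) differentiable (at y)))"

definition test_functions :: "cfun set" where
  "test_functions = {\<phi>. smooth2 \<phi> \<and> (\<forall>x y. \<phi> (x, y + 2 * pi) = \<phi> (x, y)) \<and>
      (\<exists>a b. 1 < a \<and> (\<forall>x y. (x \<le> a \<or> b \<le> x) \<longrightarrow> \<phi> (x, y) = 0))}"

definition dA :: "(real \<times> real) measure" where
  "dA = density lborel (\<lambda>p. indicator ({1<..} \<times> {0..<2 * pi}) p * ennreal (1 / \<bar>fst p\<bar>))"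

definition L2 :: "cfun \<Rightarrow> bool" where
  "L2 f \<longleftrightarrow> f \<in> borel_measurable dA \<and> integrable dA (\<lambda>p. (cmod (f p))\<^sup>2)"

definition L2_inner :: "cfun \<Rightarrow> cfun \<Rightarrow> complex" where
  "L2_inner f g = integral\<^sup>L dA (\<lambda>p. f p * cnj (g p))"

definition L2_dist2 :: "cfun \<Rightarrow> cfun \<Rightarrow> real" where
  "L2_dist2 f g = integral\<^sup>L dA (\<lambda>p. (cmod (f p - g p))\<^sup>2)"

text \<open>Operators are treated via their graphs (sets of pairs of L2 representatives;
  all notions below are invariant under a.e. equality).\<close>
definition graph_closure :: "(cfun \<times> cfun) set \<Rightarrow> (cfun \<times> cfun) set" where
  "graph_closure G = {(u, v). L2 u \<and> L2 v \<and>
     (\<exists>s. (\<forall>n. s n \<in> G) \<and> (\<lambda>n. L2_dist2 (fst (s n)) u) \<longlonglongrightarrow> 0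
                       \<and> (\<lambda>n. L2_dist2 (snd (s n)) v) \<longlonglongrightarrow> 0)}"

definition graph_adjoint :: "(cfun \<times> cfun) set \<Rightarrow> (cfun \<times> cfun) set" where
  "graph_adjoint G = {(u, w). L2 u \<and> L2 w \<and>
     (\<forall>(f, g)\<in>G. L2_inner g u = L2_inner f w)}"

definition self_adjoint_graph :: "(cfun \<times> cfun) set \<Rightarrow> bool" where
  "self_adjoint_graph G \<longleftrightarrow> G = graph_adjoint G"

definition essentially_self_adjoint :: "(cfun \<times> cfun) set \<Rightarrow> bool" where
  "essentially_self_adjoint G \<longleftrightarrow> self_adjoint_graph (graph_closure G)"

definition Delta_ex :: "cfun \<Rightarrow> cfun" where
  "Delta_ex \<phi> = (\<lambda>(x, y). pdx (pdx \<phi>) (x, y) + complex_of_real (x\<^sup>2) * pdy (pdy \<phi>) (x, y)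
      - complex_of_real (1 / x) * pdx \<phi> (x, y)
      + complex_of_real ((x ^ 4 + 1)\<^sup>2 / (4 * x\<^sup>2 * (x ^ 4 - 1))) * \<phi> (x, y))"

definition Delta_ex_graph :: "(cfun \<times> cfun) set" where
  "Delta_ex_graph = {(\<phi>, Delta_ex \<phi>) | \<phi>. \<phi> \<in> test_functions}"

end

theory Submission
  imports Defs "HOL-Real_Asymp.Real_Asymp"
begin

definition gA :: "real \<times> real \<Rightarrow> real" where
  "gA p = indicator ({1<..} \<times> {0..<2*pi}) p * (1 / \<bar>fst p\<bar>)"

lemma Times_borel:
  "A \<in> sets borel \<Longrightarrow> B \<in> sets borel \<Longrightarrow> A \<times> B \<in> sets (borel::('a::second_countable_topology \<times> 'b::second_countable_topology) measure)"
  by (metis borel_prod pair_measureI)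

lemma gA_meas[measurable]: "gA \<in> borel_measurable borel"
proof -
  have "({1<..} \<times> {0..<2*pi}) \<in> sets (borel :: (real \<times> real) measure)"
    by (intro Times_borel) auto
  then show ?thesis unfolding gA_def
    by (intro borel_measurable_times borel_measurable_indicator borel_measurable_divide
        borel_measurable_const borel_measurable_abs)
      (auto intro!: borel_measurable_continuous_onI continuous_intros)
qed

lemma gA_nonneg: "gA p \<ge> 0"
  by (simp add: gA_def)

lemma dA_eq: "dA = density lborel (\<lambda>p. ennreal (gA p))"
  unfolding dA_def gA_def
  by (rule arg_cong[where f="density lborel"]) (auto simp: fun_eq_iff indicator_def)

lemma null_lines: "({1::real} \<times> UNIV \<union> UNIV \<times> {2*pi::real}) \<in> null_sets lborel"
proof -
  have "({1::real} \<times> (UNIV::real set)) \<in> null_sets (lborel \<Otimes>\<^sub>M lborel)"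
    by (rule sigma_finite_measure.times_in_null_sets1[OF sigma_finite_lborel]) auto
  moreover have "((UNIV::real set) \<times> {2*pi::real}) \<in> null_sets (lborel \<Otimes>\<^sub>M lborel)"
    by (rule sigma_finite_measure.times_in_null_sets2[OF sigma_finite_lborel]) auto
  ultimately show ?thesis by (simp add: lborel_prod null_sets.Un)
qed

lemma box_lemma:
  fixes F H :: "real \<times> real \<Rightarrow> 'b::euclidean_space"
  assumes a1: "1 \<le> a" and ab: "a \<le> b"
    and Fm: "F \<in> borel_measurable borel"
    and Hc: "continuous_on (cbox (a,0) (b,2*pi)) H"
    and FH: "\<And>x y. 1 < x \<Longrightarrow> 0 \<le> y \<Longrightarrow> y < 2*pi \<Longrightarrow>
               F (x,y) = (if a \<le> x \<and> x \<le> b then x *\<^sub>R H (x,y) else 0)"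
  shows "integrable dA F" "integral\<^sup>L dA F = integral (cbox (a,0) (b,2*pi)) H"
proof -
  define S :: "(real \<times> real) set" where "S = ({1<..} \<inter> {a..b}) \<times> {0..<2*pi}"
  define K :: "(real \<times> real) set" where "K = cbox (a,0) (b,2*pi)"
  have SK: "S \<subseteq> K" using a1 by (auto simp: S_def K_def cbox_Pair_eq)
  have Sm: "S \<in> sets lborel" unfolding S_def sets_lborel by (intro Times_borel) auto
  have eq: "gA p *\<^sub>R F p = indicator S p *\<^sub>R H p" for p
  proof (cases p)
    case (Pair x y)
    show ?thesis
    proof (cases "p \<in> {1<..} \<times> {0..<2*pi}")
      case True
      then have "1 < x" "0 \<le> y" "y < 2*pi" using Pair by auto
      then show ?thesis using FH[of x y] Pair
        by (auto simp: gA_def S_def indicator_def)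
    next
      case False
      then show ?thesis using Pair by (auto simp: gA_def S_def indicator_def)
    qed
  qed
  have Kint: "integrable lborel (\<lambda>p. indicator K p *\<^sub>R H p)"
    by (rule borel_integrable_compact) (simp_all add: K_def compact_cbox Hc)
  then have Kint': "set_integrable lborel K H" by (simp add: set_integrable_def)
  then have Sint: "set_integrable lborel S H"
    by (rule set_integrable_subset) (use Sm SK in auto)
  have int1: "integrable lborel (\<lambda>p. gA p *\<^sub>R F p)"
    using Sint by (simp add: eq set_integrable_def)
  show "integrable dA F" unfolding dA_eq
    by (subst integrable_density) (use int1 Fm gA_nonneg in auto)
  have "integral\<^sup>L dA F = integral\<^sup>L lborel (\<lambda>p. gA p *\<^sub>R F p)"
    unfolding dA_eq by (rule integral_density) (auto simp: Fm gA_nonneg)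
  also have "\<dots> = (LINT p:S|lborel. H p)" by (simp add: eq set_lebesgue_integral_def)
  also have "\<dots> = (LINT p:K|lborel. H p)"
  proof (rule set_integral_cong_set)
    show "set_borel_measurable lborel K H" using Kint' 
      unfolding set_integrable_def set_borel_measurable_def by (rule borel_measurable_integrable)
    show "set_borel_measurable lborel S H" using Sint
      unfolding set_integrable_def set_borel_measurable_def by (rule borel_measurable_integrable)
    show "AE x in lborel. (x \<in> K) = (x \<in> S)"
    proof (rule AE_I'[OF null_lines])
      show "{x \<in> space lborel. \<not> (x \<in> K) = (x \<in> S)} \<subseteq> {1} \<times> UNIV \<union> UNIV \<times> {2 * pi}"
        using a1 by (auto simp: K_def S_def cbox_Pair_eq)
    qed
  qed
  also have "\<dots> = integral K H" by (rule set_borel_integral_eq_integral(2)) fact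
  finally show "integral\<^sup>L dA F = integral (cbox (a,0) (b,2*pi)) H" by (simp add: K_def)
qed

lemma L2_meas: "L2 f \<Longrightarrow> f \<in> borel_measurable dA"
  by (simp add: L2_def)

lemma L2_sq_int: "L2 f \<Longrightarrow> integrable dA (\<lambda>p. (cmod (f p))\<^sup>2)"
  by (simp add: L2_def)

lemma cnj_meas[measurable]: "g \<in> borel_measurable M \<Longrightarrow> (\<lambda>x. cnj (g x)) \<in> borel_measurable M"
  by (rule measurable_compose[OF _ borel_measurable_continuous_onI[OF continuous_on_cnj[OF continuous_on_id]]])

lemma prod_le_sq: "cmod (a * cnj b) \<le> (cmod a)\<^sup>2 / (2*e) + e * (cmod b)\<^sup>2 / 2" if "e > 0" for a b :: complex and e :: real
proof -
  have "0 \<le> (cmod a - e * cmod b)\<^sup>2" by simp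
  then have "2 * e * (cmod a * cmod b) \<le> (cmod a)\<^sup>2 + e\<^sup>2 * (cmod b)\<^sup>2"
    by (simp add: power2_eq_square algebra_simps)
  then have "cmod a * cmod b \<le> ((cmod a)\<^sup>2 + e\<^sup>2 * (cmod b)\<^sup>2) / (2*e)"
    using that by (simp add: field_simps)
  also have "\<dots> = (cmod a)\<^sup>2 / (2*e) + e * (cmod b)\<^sup>2 / 2"
    using that by (simp add: field_simps power2_eq_square)
  finally show ?thesis by (simp add: norm_mult)
qed

lemma L2_prod_int:
  assumes "L2 f" "L2 g"
  shows "integrable dA (\<lambda>p. f p * cnj (g p))"
proof (rule Bochner_Integration.integrable_bound)
  show "integrable dA (\<lambda>p. (cmod (f p))\<^sup>2 / (2*1) + 1 * (cmod (g p))\<^sup>2 / 2)"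
    using L2_sq_int[OF assms(1)] L2_sq_int[OF assms(2)] by auto
  show "(\<lambda>p. f p * cnj (g p)) \<in> borel_measurable dA"
    using L2_meas[OF assms(1)] L2_meas[OF assms(2)] by measurable
  show "AE x in dA. norm (f x * cnj (g x)) \<le> norm ((cmod (f x))\<^sup>2 / (2*1) + 1 * (cmod (g x))\<^sup>2 / 2)"
  proof (rule AE_I2)
    fix x
    show "norm (f x * cnj (g x)) \<le> norm ((cmod (f x))\<^sup>2 / (2*1) + 1 * (cmod (g x))\<^sup>2 / 2)"
      unfolding real_norm_def[of "_ + _"] by (rule order.trans[OF prod_le_sq abs_ge_self]) simp
  qed
qed

lemma L2_diff:
  assumes "L2 f" "L2 g"
  shows "L2 (\<lambda>p. f p - g p)"
  unfolding L2_def
proof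
  show m: "(\<lambda>p. f p - g p) \<in> borel_measurable dA"
    using L2_meas[OF assms(1)] L2_meas[OF assms(2)] by measurable
  show "integrable dA (\<lambda>p. (cmod (f p - g p))\<^sup>2)"
  proof (rule Bochner_Integration.integrable_bound)
    show "integrable dA (\<lambda>p. 2 * (cmod (f p))\<^sup>2 + 2 * (cmod (g p))\<^sup>2)"
      using L2_sq_int[OF assms(1)] L2_sq_int[OF assms(2)] by auto
    show "(\<lambda>p. (cmod (f p - g p))\<^sup>2) \<in> borel_measurable dA" using m by measurable
    have "(cmod (a - b))\<^sup>2 \<le> 2 * (cmod a)\<^sup>2 + 2 * (cmod b)\<^sup>2" for a b :: complex
    proof -
      have "cmod (a - b) \<le> cmod a + cmod b" by (rule norm_triangle_ineq4)
      then have "(cmod (a - b))\<^sup>2 \<le> (cmod a + cmod b)\<^sup>2" by (simp add: power_mono)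
      also have "\<dots> \<le> 2 * (cmod a)\<^sup>2 + 2 * (cmod b)\<^sup>2"
        using sum_squares_ge_zero[of "cmod a - cmod b" 0] by (simp add: power2_eq_square algebra_simps)
      finally show ?thesis .
    qed
    then show "AE x in dA. norm ((cmod (f x - g x))\<^sup>2) \<le> norm (2 * (cmod (f x))\<^sup>2 + 2 * (cmod (g x))\<^sup>2)"
      by (intro AE_I2) simp
  qed
qed

lemma inner_bound:
  assumes "L2 f" "L2 g" "e > 0"
  shows "cmod (L2_inner f g) \<le> (integral\<^sup>L dA (\<lambda>p. (cmod (f p))\<^sup>2)) / (2*e)
            + e * (integral\<^sup>L dA (\<lambda>p. (cmod (g p))\<^sup>2)) / 2"
proof -
  have "cmod (L2_inner f g) \<le> integral\<^sup>L dA (\<lambda>p. cmod (f p * cnj (g p)))"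
    unfolding L2_inner_def by (rule integral_norm_bound)
  also have "\<dots> \<le> integral\<^sup>L dA (\<lambda>p. (cmod (f p))\<^sup>2 / (2*e) + e * (cmod (g p))\<^sup>2 / 2)"
    using L2_prod_int[OF assms(1,2)] L2_sq_int[OF assms(1)] L2_sq_int[OF assms(2)] prod_le_sq[OF assms(3)]
    by (intro integral_mono) auto
  also have "\<dots> = (integral\<^sup>L dA (\<lambda>p. (cmod (f p))\<^sup>2)) / (2*e)
            + e * (integral\<^sup>L dA (\<lambda>p. (cmod (g p))\<^sup>2)) / 2"
    using L2_sq_int[OF assms(1)] L2_sq_int[OF assms(2)] by simp
  finally show ?thesis .
qed

lemma inner_lim:
  assumes u: "L2 u" and z: "L2 z" and a: "\<And>n. L2 (a n)"
    and lim: "(\<lambda>n. L2_dist2 (a n) u) \<longlonglongrightarrow> 0"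
  shows "(\<lambda>n. L2_inner (a n) z) \<longlonglongrightarrow> L2_inner u z"
proof (rule tendstoI)
  fix r :: real assume r: "r > 0"
  define Z where "Z = integral\<^sup>L dA (\<lambda>p. (cmod (z p))\<^sup>2)"
  have Z0: "Z \<ge> 0" unfolding Z_def by (rule integral_nonneg_AE) auto
  define e where "e = r / (Z + 1)"
  have e0: "e > 0" using r Z0 by (simp add: e_def)
  have eZ: "e * Z / 2 < r / 2"
  proof -
    have "e * Z < e * (Z + 1)" using e0 by simp
    also have "\<dots> = r" using Z0 by (simp add: e_def)
    finally have "e * Z < r" .
    then show ?thesis using r by linarith
  qed
  have "eventually (\<lambda>n. dist (L2_dist2 (a n) u) 0 < r * e) sequentially"
    using lim e0 r by (intro tendstoD) auto
  then show "eventually (\<lambda>n. dist (L2_inner (a n) z) (L2_inner u z) < r) sequentially"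
  proof eventually_elim
    case (elim n)
    have d: "L2 (\<lambda>p. a n p - u p)" by (rule L2_diff[OF a u])
    have "L2_inner (a n) z - L2_inner u z = L2_inner (\<lambda>p. a n p - u p) z"
      unfolding L2_inner_def
      using Bochner_Integration.integral_diff[OF L2_prod_int[OF a z, of n] L2_prod_int[OF u z]]
      by (simp add: algebra_simps)
    then have "dist (L2_inner (a n) z) (L2_inner u z) = cmod (L2_inner (\<lambda>p. a n p - u p) z)"
      by (simp add: dist_norm)
    also have "\<dots> \<le> L2_dist2 (a n) u / (2*e) + e * Z / 2"
      using inner_bound[OF d z e0] by (simp add: L2_dist2_def Z_def)
    also have "L2_dist2 (a n) u / (2*e) < r / 2"
    proof -
      have "L2_dist2 (a n) u < r * e" using elim
        by (simp add: dist_real_def)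
      then show ?thesis using e0 by (simp add: field_simps)
    qed
    finally show ?case using eZ by linarith
  qed
qed

lemma limit_eq_aux:
  assumes GL2: "\<And>f g. (f,g) \<in> G \<Longrightarrow> L2 f \<and> L2 g"
    and A: "(u,w) \<in> graph_adjoint G"
    and sG: "\<And>n. s n \<in> G" and Lf: "L2 f" and Lg: "L2 g"
    and l1: "(\<lambda>n. L2_dist2 (fst (s n)) f) \<longlonglongrightarrow> 0"
    and l2: "(\<lambda>n. L2_dist2 (snd (s n)) g) \<longlonglongrightarrow> 0"
  shows "L2_inner g u = L2_inner f w"
proof -
  from A have Lu: "L2 u" and Lw: "L2 w" and ad: "\<forall>(f,g)\<in>G. L2_inner g u = L2_inner f w"
    by (auto simp: graph_adjoint_def)
  have Ls: "L2 (fst (s n))" "L2 (snd (s n))" for n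
    using GL2[of "fst (s n)" "snd (s n)"] sG[of n] by auto
  have t1: "(\<lambda>n. L2_inner (snd (s n)) u) \<longlonglongrightarrow> L2_inner g u"
    by (rule inner_lim[OF Lg Lu Ls(2) l2])
  have t2: "(\<lambda>n. L2_inner (fst (s n)) w) \<longlonglongrightarrow> L2_inner f w"
    by (rule inner_lim[OF Lf Lw Ls(1) l1])
  have eq: "L2_inner (snd (s n)) u = L2_inner (fst (s n)) w" for n
    using ad sG[of n] by (cases "s n") auto
  show ?thesis using t1 t2 unfolding eq by (rule LIMSEQ_unique)
qed

lemma not_esa:
  assumes GL2: "\<And>f g. (f,g) \<in> G \<Longrightarrow> L2 f \<and> L2 g"
    and A1: "(u1,w1) \<in> graph_adjoint G" and A2: "(u2,w2) \<in> graph_adjoint G"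
    and ne: "L2_inner w1 u2 \<noteq> L2_inner u1 w2"
  shows "\<not> essentially_self_adjoint G"
proof
  assume "essentially_self_adjoint G"
  then have C: "graph_closure G = graph_adjoint (graph_closure G)"
    by (simp add: essentially_self_adjoint_def self_adjoint_graph_def)
  from A1 have L1: "L2 u1" "L2 w1" by (auto simp: graph_adjoint_def)
  have "(u1,w1) \<in> graph_adjoint (graph_closure G)"
    unfolding graph_adjoint_def
  proof (clarsimp simp: L1)
    fix f g assume "(f,g) \<in> graph_closure G"
    then obtain s where "L2 f" "L2 g" "\<And>n. s n \<in> G"
      "(\<lambda>n. L2_dist2 (fst (s n)) f) \<longlonglongrightarrow> 0" "(\<lambda>n. L2_dist2 (snd (s n)) g) \<longlonglongrightarrow> 0"
      by (auto simp: graph_closure_def)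
    then show "L2_inner g u1 = L2_inner f w1" by (intro limit_eq_aux[OF GL2 A1]) auto
  qed
  then have "(u1,w1) \<in> graph_closure G" using C by simp
  then obtain s where "\<And>n. s n \<in> G"
      "(\<lambda>n. L2_dist2 (fst (s n)) u1) \<longlonglongrightarrow> 0" "(\<lambda>n. L2_dist2 (snd (s n)) w1) \<longlonglongrightarrow> 0"
      by (auto simp: graph_closure_def)
  then have "L2_inner w1 u2 = L2_inner u1 w2" by (intro limit_eq_aux[OF GL2 A2]) (auto simp: L1)
  with ne show False by simp
qed

lemma sets_dA: "sets dA = sets borel" by (simp add: dA_def)

lemma meas_dA: "f \<in> borel_measurable borel \<Longrightarrow> f \<in> borel_measurable dA"
  by (metis measurable_cong_sets sets_dA)

lemma L2_box:
  fixes f :: cfun and H :: "real \<times> real \<Rightarrow> real"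
  assumes "1 \<le> a" "a \<le> b" "f \<in> borel_measurable borel"
    and Hc: "continuous_on (cbox (a,0) (b,2*pi)) H"
    and inb: "\<And>x y. 1 < x \<Longrightarrow> 0 \<le> y \<Longrightarrow> y < 2*pi \<Longrightarrow> a \<le> x \<Longrightarrow> x \<le> b \<Longrightarrow> (cmod (f (x,y)))\<^sup>2 = x * H (x,y)"
    and outb: "\<And>x y. 1 < x \<Longrightarrow> 0 \<le> y \<Longrightarrow> y < 2*pi \<Longrightarrow> \<not> (a \<le> x \<and> x \<le> b) \<Longrightarrow> f (x,y) = 0"
  shows "L2 f"
  unfolding L2_def
proof
  show "f \<in> borel_measurable dA" by (rule meas_dA) fact
  show "integrable dA (\<lambda>p. (cmod (f p))\<^sup>2)"
  proof (rule box_lemma(1)[OF assms(1,2) _ Hc])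
    show "(\<lambda>p. (cmod (f p))\<^sup>2) \<in> borel_measurable borel" using assms(3) by measurable
    show "(cmod (f (x, y)))\<^sup>2 = (if a \<le> x \<and> x \<le> b then x *\<^sub>R H (x, y) else 0)"
      if "1 < x" "0 \<le> y" "y < 2 * pi" for x y
      using inb[OF that] outb[OF that] by auto
  qed
qed

definition Vp :: "real \<Rightarrow> real" where
  "Vp x = (x ^ 4 + 1)\<^sup>2 / (4 * x\<^sup>2 * (x ^ 4 - 1))"

lemma Delta_ex_eq:
  "Delta_ex \<phi> p = pdx (pdx \<phi>) p + of_real ((fst p)\<^sup>2) * pdy (pdy \<phi>) p
     - of_real (1 / fst p) * pdx \<phi> p + of_real (Vp (fst p)) * \<phi> p"
  by (cases p) (simp add: Delta_ex_def Vp_def)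

lemma Vp_cont: "continuous_on {1<..} Vp"
proof -
  have "x ^ 4 - 1 \<noteq> 0" if "x \<in> {1<..}" for x :: real
  proof -
    have "1 < x ^ 4" by (rule one_less_power) (use that in auto)
    then show ?thesis by simp
  qed
  then show ?thesis unfolding Vp_def by (intro continuous_intros) auto
qed

lemma Vp_meas[measurable]: "Vp \<in> borel_measurable borel"
  unfolding Vp_def by measurable

lemma fst_comp_meas[measurable]:
  "h \<in> borel_measurable borel \<Longrightarrow> (\<lambda>p::real\<times>real. h (fst p)) \<in> borel_measurable borel"
  by (rule measurable_compose[OF borel_measurable_continuous_onI[OF continuous_on_fst[OF continuous_on_id]]])

lemma fst_comp_cont:
  assumes "continuous_on {a..b} h"
  shows "continuous_on (cbox (a,c) (b,d)) (\<lambda>p::real\<times>real. h (fst p))"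
  by (rule continuous_on_compose2[OF assms continuous_on_fst[OF continuous_on_id]])
     (auto simp: cbox_Pair_eq)

section \<open>Test functions\<close>

lemma smooth2_D:
  assumes "smooth2 f" "g \<in> iter_partials n f"
  shows "continuous_on UNIV g"
    "((\<lambda>t. g (t, y)) has_vector_derivative pdx g (x, y)) (at x)"
    "((\<lambda>t. g (x, t)) has_vector_derivative pdy g (x, y)) (at y)"
proof -
  from assms have c: "continuous_on UNIV g"
    and d: "\<And>x y. (\<lambda>t. g (t, y)) differentiable (at x) \<and> (\<lambda>t. g (x, t)) differentiable (at y)"
    unfolding smooth2_def by blast+
  show "continuous_on UNIV g" by (rule c)
  show "((\<lambda>t. g (t, y)) has_vector_derivative pdx g (x, y)) (at x)"
    using d by (auto simp: pdx_def vector_derivative_works)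
  show "((\<lambda>t. g (x, t)) has_vector_derivative pdy g (x, y)) (at y)"
    using d by (auto simp: pdy_def vector_derivative_works)
qed

lemma ip_mem:
  "f \<in> iter_partials 0 f" "pdx f \<in> iter_partials (Suc 0) f" "pdy f \<in> iter_partials (Suc 0) f"
  "pdx (pdx f) \<in> iter_partials (Suc (Suc 0)) f" "pdy (pdy f) \<in> iter_partials (Suc (Suc 0)) f"
  by auto

lemma loc_zero:
  assumes "(f has_vector_derivative D) (at x)" "open S" "x \<in> S" "\<And>t. t \<in> S \<Longrightarrow> f t = 0"
  shows "D = 0"
proof -
  have "((\<lambda>t. 0) has_vector_derivative D) (at x)"
    by (rule has_vector_derivative_transform_within_open[OF assms(1-3)]) (use assms(4) in auto)
  moreover have "((\<lambda>t. 0) has_vector_derivative 0) (at x)" by simp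
  ultimately show ?thesis by (rule vector_derivative_unique_at)
qed

locale testfn =
  fixes \<phi> :: cfun
  assumes tf: "\<phi> \<in> test_functions"
begin

lemma sm: "smooth2 \<phi>" using tf by (simp add: test_functions_def)

lemma per: "\<phi> (x, y + 2 * pi) = \<phi> (x, y)" using tf by (simp add: test_functions_def)

lemma cont:
  "continuous_on UNIV \<phi>" "continuous_on UNIV (pdx \<phi>)" "continuous_on UNIV (pdy \<phi>)"
  "continuous_on UNIV (pdx (pdx \<phi>))" "continuous_on UNIV (pdy (pdy \<phi>))"
  using smooth2_D(1)[OF sm ip_mem(1)] smooth2_D(1)[OF sm ip_mem(2)] smooth2_D(1)[OF sm ip_mem(3)]
    smooth2_D(1)[OF sm ip_mem(4)] smooth2_D(1)[OF sm ip_mem(5)] by auto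

lemma der:
  "((\<lambda>t. \<phi> (t, y)) has_vector_derivative pdx \<phi> (x, y)) (at x)"
  "((\<lambda>t. pdx \<phi> (t, y)) has_vector_derivative pdx (pdx \<phi>) (x, y)) (at x)"
  "((\<lambda>t. \<phi> (x, t)) has_vector_derivative pdy \<phi> (x, y)) (at y)"
  "((\<lambda>t. pdy \<phi> (x, t)) has_vector_derivative pdy (pdy \<phi>) (x, y)) (at y)"
  using smooth2_D(2)[OF sm ip_mem(1)] smooth2_D(2)[OF sm ip_mem(2)] smooth2_D(3)[OF sm ip_mem(1)]
    smooth2_D(3)[OF sm ip_mem(3)] by auto

lemma pdy_per: "pdy \<phi> (x, y + 2 * pi) = pdy \<phi> (x, y)"
proof -
  let ?h = "\<lambda>t. \<phi> (x, t)"
  have "((?h \<circ> (\<lambda>t. t + 2 * pi)) has_vector_derivative (1 *\<^sub>R pdy \<phi> (x, y + 2 * pi))) (at y)"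
    by (rule vector_diff_chain_at) (auto intro!: derivative_eq_intros der(3))
  moreover have "?h \<circ> (\<lambda>t. t + 2 * pi) = ?h" using per by (auto simp: o_def)
  ultimately have "(?h has_vector_derivative pdy \<phi> (x, y + 2 * pi)) (at y)" by simp
  then show ?thesis using der(3)[of x y] by (rule vector_derivative_unique_at)
qed

lemma supp: obtains a b where "1 < a" "a < b"
  "\<And>x y. x \<le> a \<or> b \<le> x \<Longrightarrow> \<phi> (x, y) = 0 \<and> pdx \<phi> (x, y) = 0 \<and> pdx (pdx \<phi>) (x, y) = 0
      \<and> pdy \<phi> (x, y) = 0 \<and> pdy (pdy \<phi>) (x, y) = 0"
proof -
  obtain a0 b0 where a0: "1 < a0" and z: "\<And>x y. x \<le> a0 \<or> b0 \<le> x \<Longrightarrow> \<phi> (x, y) = 0"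
    using tf unfolding test_functions_def by blast
  define a where "a = (1 + a0) / 2"
  define b where "b = max b0 a0 + 1"
  have "1 < a" "a < b" using a0 by (auto simp: a_def b_def)
  moreover
  have "\<phi> (x, y) = 0 \<and> pdx \<phi> (x, y) = 0 \<and> pdx (pdx \<phi>) (x, y) = 0
      \<and> pdy \<phi> (x, y) = 0 \<and> pdy (pdy \<phi>) (x, y) = 0" if "x \<le> a \<or> b \<le> x" for x y
  proof -
    define S where "S = (if x \<le> a then {..<a0} else {b0<..})"
    have S: "open S" "x \<in> S" "\<And>t. t \<in> S \<Longrightarrow> t \<le> a0 \<or> b0 \<le> t"
      using that a0 by (auto simp: S_def a_def b_def split: if_splits)
    have z1: "\<phi> (t, y') = 0" if "t \<in> S" for t y' using z S(3)[OF that] by blast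
    have p1: "pdx \<phi> (t, y') = 0" if "t \<in> S" for t y'
      by (rule loc_zero[OF der(1) S(1) that]) (use z1 in auto)
    have p2: "pdx (pdx \<phi>) (x, y) = 0"
      by (rule loc_zero[OF der(2) S(1,2)]) (use p1 in auto)
    have e1: "(\<lambda>t. \<phi> (x, t)) = (\<lambda>t. 0)" using z1[OF S(2)] by auto
    have q1: "pdy \<phi> (x, y') = 0" for y' by (simp add: pdy_def e1)
    have e2: "(\<lambda>t. pdy \<phi> (x, t)) = (\<lambda>t. 0)" using q1 by auto
    have q2: "pdy (pdy \<phi>) (x, y) = 0" by (simp add: pdy_def[of "pdy \<phi>"] e2)
    show ?thesis using z1[OF S(2)] p1[OF S(2)] p2 q1 q2 by auto
  qed
  ultimately show ?thesis using that by blast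
qed

lemma meas:
  "\<phi> \<in> borel_measurable borel" "pdx \<phi> \<in> borel_measurable borel" "pdy \<phi> \<in> borel_measurable borel"
  "pdx (pdx \<phi>) \<in> borel_measurable borel" "pdy (pdy \<phi>) \<in> borel_measurable borel"
  using cont by (auto intro: borel_measurable_continuous_onI)

lemma Dmeas: "Delta_ex \<phi> \<in> borel_measurable borel"
proof -
  have m1: "(\<lambda>p::real\<times>real. complex_of_real ((fst p)\<^sup>2)) \<in> borel_measurable borel"
    by (rule measurable_compose[OF fst_comp_meas[of "\<lambda>x. x\<^sup>2"]]) simp_all
  have m2: "(\<lambda>p::real\<times>real. complex_of_real (1 / fst p)) \<in> borel_measurable borel"
    by (rule measurable_compose[OF fst_comp_meas[of "\<lambda>x. 1 / x"]]) simp_all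
  have m3: "(\<lambda>p::real\<times>real. complex_of_real (Vp (fst p))) \<in> borel_measurable borel"
    by (rule measurable_compose[OF fst_comp_meas[of "Vp"]]) simp_all
  show ?thesis unfolding Delta_ex_eq[abs_def] using meas m1 m2 m3 by measurable
qed

lemma Dcont: "continuous_on {p. 1 < fst p} (Delta_ex \<phi>)"
proof -
  have c1: "continuous_on {p::real\<times>real. 1 < fst p} (\<lambda>p. Vp (fst p))"
    by (rule continuous_on_compose2[OF Vp_cont continuous_on_fst[OF continuous_on_id]]) auto
  have c0: "continuous_on {p. 1 < fst p} g" if "continuous_on UNIV g" for g :: cfun
    using that by (rule continuous_on_subset) auto
  show ?thesis unfolding Delta_ex_eq[abs_def]
    using cont[THEN c0] c1
    by (intro continuous_intros) auto
qed

lemma D_zero: "x \<le> a \<or> b \<le> x \<Longrightarrow> (\<And>y. \<phi> (x, y) = 0 \<and> pdx \<phi> (x, y) = 0 \<and> pdx (pdx \<phi>) (x, y) = 0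
      \<and> pdy \<phi> (x, y) = 0 \<and> pdy (pdy \<phi>) (x, y) = 0) \<Longrightarrow> Delta_ex \<phi> (x, y) = 0"
  by (simp add: Delta_ex_eq)

lemma L2_gen:
  assumes "1 < a" "a \<le> b" "f \<in> borel_measurable borel" "continuous_on {p. 1 < fst p} f"
    and z: "\<And>x y. x < a \<or> b < x \<Longrightarrow> f (x, y) = 0"
  shows "L2 f"
proof (rule L2_box[where H="\<lambda>p. (cmod (f p))\<^sup>2 / fst p"])
  show "1 \<le> a" "a \<le> b" "f \<in> borel_measurable borel" using assms by auto
  have sub: "cbox (a, 0) (b, 2 * pi) \<subseteq> {p. 1 < fst p}" using assms(1) by (auto simp: cbox_Pair_eq)
  have "continuous_on (cbox (a, 0) (b, 2 * pi)) f" by (rule continuous_on_subset[OF assms(4) sub])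
  then show "continuous_on (cbox (a, 0) (b, 2 * pi)) (\<lambda>p. (cmod (f p))\<^sup>2 / fst p)"
    using sub by (intro continuous_intros) auto
  show "(cmod (f (x, y)))\<^sup>2 = x * ((cmod (f (x, y)))\<^sup>2 / fst (x, y))" if "1 < x" for x y
    using that by simp
  show "f (x, y) = 0" if "\<not> (a \<le> x \<and> x \<le> b)" for x y
    using that z by auto
qed

lemma L2_phi: "L2 \<phi>"
proof -
  obtain a b where ab: "1 < a" "a < b" and z: "\<And>x y. x \<le> a \<or> b \<le> x \<Longrightarrow> \<phi> (x, y) = 0 \<and> pdx \<phi> (x, y) = 0 \<and> pdx (pdx \<phi>) (x, y) = 0
      \<and> pdy \<phi> (x, y) = 0 \<and> pdy (pdy \<phi>) (x, y) = 0" using supp by blast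
  show ?thesis
    by (rule L2_gen[OF ab(1) less_imp_le[OF ab(2)] meas(1)])
       (use cont(1) z in \<open>auto intro: continuous_on_subset\<close>)
qed

lemma L2_Dphi: "L2 (Delta_ex \<phi>)"
proof -
  obtain a b where ab: "1 < a" "a < b" and z: "\<And>x y. x \<le> a \<or> b \<le> x \<Longrightarrow> \<phi> (x, y) = 0 \<and> pdx \<phi> (x, y) = 0 \<and> pdx (pdx \<phi>) (x, y) = 0
      \<and> pdy \<phi> (x, y) = 0 \<and> pdy (pdy \<phi>) (x, y) = 0" using supp by blast
  show ?thesis
  proof (rule L2_gen[OF ab(1) less_imp_le[OF ab(2)] Dmeas Dcont])
    show "Delta_ex \<phi> (x, y) = 0" if "x < a \<or> b < x" for x y
      by (rule D_zero[of x a b]) (use that z in auto)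
  qed
qed

end

lemma G_L2: "(f, g) \<in> Delta_ex_graph \<Longrightarrow> L2 f \<and> L2 g"
  unfolding Delta_ex_graph_def using testfn.L2_phi testfn.L2_Dphi testfn.intro by blast


lemma cont_slice:
  assumes "continuous_on UNIV g"
  shows "continuous_on S (\<lambda>t. g (t, y))" "continuous_on S (\<lambda>t. g (x, t))"
  by (rule continuous_on_compose2[OF assms]; auto intro!: continuous_intros)+

lemma meas_of_L2: "L2 f \<Longrightarrow> f \<in> borel_measurable borel"
  unfolding L2_def by (metis measurable_cong_sets sets_dA)

lemma adjoint_mem:
  fixes U U1 U2 W :: "real \<Rightarrow> real"
  assumes cU: "continuous_on {1<..} U" "continuous_on {1<..} U1" "continuous_on {1<..} U2"
    and dU: "\<And>x. 1 < x \<Longrightarrow> x \<noteq> 2 \<Longrightarrow> (U has_real_derivative U1 x) (at x)"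
    and dU1: "\<And>x. 1 < x \<Longrightarrow> x \<noteq> 2 \<Longrightarrow> (U1 has_real_derivative U2 x) (at x)"
    and W: "\<And>x. 1 < x \<Longrightarrow> W x = U2 x - U1 x / x + Vp x * U x"
    and L2u: "L2 (\<lambda>p. complex_of_real (U (fst p)))" and L2w: "L2 (\<lambda>p. complex_of_real (W (fst p)))"
  shows "((\<lambda>p. complex_of_real (U (fst p))), (\<lambda>p. complex_of_real (W (fst p)))) \<in> graph_adjoint Delta_ex_graph"
  unfolding graph_adjoint_def
proof (clarsimp simp: L2u L2w Delta_ex_graph_def)
  fix \<phi> assume "\<phi> \<in> test_functions"
  then interpret testfn \<phi> by unfold_locales
  obtain a b where ab: "1 < a" "a < b" and z: "\<And>x y. x \<le> a \<or> b \<le> x \<Longrightarrow> \<phi> (x, y) = 0 \<and> pdx \<phi> (x, y) = 0 \<and> pdx (pdx \<phi>) (x, y) = 0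
      \<and> pdy \<phi> (x, y) = 0 \<and> pdy (pdy \<phi>) (x, y) = 0" using supp by blast
  have mu: "(\<lambda>p::real\<times>real. complex_of_real (U (fst p))) \<in> borel_measurable borel" by (rule meas_of_L2[OF L2u])
  have mw: "(\<lambda>p::real\<times>real. complex_of_real (W (fst p))) \<in> borel_measurable borel" by (rule meas_of_L2[OF L2w])
  have cW: "continuous_on {1<..} W"
  proof (rule continuous_on_eq)
    show "continuous_on {1<..} (\<lambda>x. U2 x - U1 x / x + Vp x * U x)"
      using cU Vp_cont by (intro continuous_intros) auto
    show "U2 x - U1 x / x + Vp x * U x = W x" if "x \<in> {1<..}" for x using W that by simp
  qed
  have sub: "{a..b} \<subseteq> {1<..}" using ab by auto
  have cab: "continuous_on {a..b} U" "continuous_on {a..b} U1" "continuous_on {a..b} U2" "continuous_on {a..b} W"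
    using cU cW continuous_on_subset[OF _ sub] by blast+
  have cab2: "continuous_on {a..b} (\<lambda>x. U x / x)" "continuous_on {a..b} (\<lambda>x. W x / x)"
    "continuous_on {a..b} (\<lambda>x. U x / x\<^sup>2)" "continuous_on {a..b} (\<lambda>x. U1 x / x)"
    "continuous_on {a..b} (\<lambda>x. U1 x / x\<^sup>2)" "continuous_on {a..b} (\<lambda>x. U2 x / x)"
    "continuous_on {a..b} (\<lambda>x. x * U x)"
    using cab ab by (auto intro!: continuous_intros)
  define K :: "(real \<times> real) set" where "K = cbox (a,0) (b, 2*pi)"
  have subK: "K \<subseteq> {p. 1 < fst p}" using ab by (auto simp: K_def cbox_Pair_eq)
  have cK: "continuous_on K g" if "continuous_on UNIV g" for g :: cfun
    using that by (rule continuous_on_subset) auto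
  have cKf: "continuous_on K (\<lambda>p. h (fst p))" if "continuous_on {a..b} h" for h :: "real \<Rightarrow> real"
    unfolding K_def by (rule fst_comp_cont[OF that])
  define H1 where "H1 = (\<lambda>p. Delta_ex \<phi> p * complex_of_real (U (fst p) / fst p))"
  define H2 where "H2 = (\<lambda>p. \<phi> p * complex_of_real (W (fst p) / fst p))"
  have cH1: "continuous_on K H1" unfolding H1_def
    using continuous_on_subset[OF Dcont subK] cKf[OF cab2(1)]
    by (intro continuous_on_mult continuous_on_of_real) auto
  have cH2: "continuous_on K H2" unfolding H2_def
    using cK[OF cont(1)] cKf[OF cab2(2)] by (intro continuous_on_mult continuous_on_of_real) auto
  have I1: "L2_inner (Delta_ex \<phi>) (\<lambda>p. complex_of_real (U (fst p))) = integral K H1"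
    unfolding L2_inner_def K_def
  proof (rule box_lemma(2)[OF less_imp_le[OF ab(1)] less_imp_le[OF ab(2)]])
    show "(\<lambda>p. Delta_ex \<phi> p * cnj (complex_of_real (U (fst p)))) \<in> borel_measurable borel"
      using Dmeas mu by measurable
    show "continuous_on (cbox (a, 0) (b, 2 * pi)) H1" using cH1 by (simp add: K_def)
    show "Delta_ex \<phi> (x, y) * cnj (complex_of_real (U (fst (x, y)))) =
          (if a \<le> x \<and> x \<le> b then x *\<^sub>R H1 (x, y) else 0)" if "1 < x" "0 \<le> y" "y < 2 * pi" for x y
    proof (cases "a \<le> x \<and> x \<le> b")
      case True then show ?thesis using that by (simp add: H1_def scaleR_conv_of_real field_simps)
    next
      case False
      then have "Delta_ex \<phi> (x, y) = 0" by (intro D_zero[of x a b]) (use z in auto)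
      then show ?thesis using False by auto
    qed
  qed
  have I2: "L2_inner \<phi> (\<lambda>p. complex_of_real (W (fst p))) = integral K H2"
    unfolding L2_inner_def K_def
  proof (rule box_lemma(2)[OF less_imp_le[OF ab(1)] less_imp_le[OF ab(2)]])
    show "(\<lambda>p. \<phi> p * cnj (complex_of_real (W (fst p)))) \<in> borel_measurable borel"
      using meas(1) mw by measurable
    show "continuous_on (cbox (a, 0) (b, 2 * pi)) H2" using cH2 by (simp add: K_def)
    show "\<phi> (x, y) * cnj (complex_of_real (W (fst (x, y)))) =
          (if a \<le> x \<and> x \<le> b then x *\<^sub>R H2 (x, y) else 0)" if "1 < x" "0 \<le> y" "y < 2 * pi" for x y
    proof (cases "a \<le> x \<and> x \<le> b")
      case True then show ?thesis using that by (simp add: H2_def scaleR_conv_of_real field_simps)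
    next
      case False
      then have "\<phi> (x, y) = 0" using z by auto
      then show ?thesis using False by auto
    qed
  qed
  define A where "A = (\<lambda>p. (U (fst p) / fst p) *\<^sub>R pdx (pdx \<phi>) p - (U (fst p) / (fst p)\<^sup>2) *\<^sub>R pdx \<phi> p
      - (U2 (fst p) / fst p) *\<^sub>R \<phi> p + (U1 (fst p) / (fst p)\<^sup>2) *\<^sub>R \<phi> p)"
  define B where "B = (\<lambda>p. (fst p * U (fst p)) *\<^sub>R pdy (pdy \<phi>) p)"
  have cA: "continuous_on K A" unfolding A_def
    using cK[OF cont(1)] cK[OF cont(2)] cK[OF cont(4)] cKf[OF cab2(1)] cKf[OF cab2(3)] cKf[OF cab2(5)] cKf[OF cab2(6)]
    by (intro continuous_on_diff continuous_on_add continuous_on_scaleR) auto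
  have cB: "continuous_on K B" unfolding B_def
    using cK[OF cont(5)] cKf[OF cab2(7)] by (intro continuous_on_scaleR) auto
  have eqAB: "H1 p - H2 p = A p + B p" if "p \<in> K" for p
  proof -
    obtain x y where p: "p = (x, y)" by (cases p)
    have x1: "1 < x" using subK that p by auto
    then have x0: "x \<noteq> 0" by auto
    show ?thesis using x0
      by (simp add: p H1_def H2_def A_def B_def Delta_ex_eq W[OF x1] scaleR_conv_of_real
          field_simps power2_eq_square)
  qed
  have IA: "integral K A = 0"
  proof -
    have "integral K A = integral {a..b} (\<lambda>x. integral {0..2*pi} (\<lambda>y. A (x,y)))"
      using integral_prod_continuous[OF cA[unfolded K_def]] by (simp add: K_def)
    also have "\<dots> = integral {0..2*pi} (\<lambda>y. integral {a..b} (\<lambda>x. A (x,y)))"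
      using integral_swap_continuous[of a 0 b "2*pi" "\<lambda>x y. A (x,y)"] cA by (simp add: K_def)
    also have "\<dots> = integral {0..2*pi} (\<lambda>y. 0)"
    proof (rule integral_cong)
      fix y :: real
      define P where "P = (\<lambda>t. (U t / t) *\<^sub>R pdx \<phi> (t, y) - (U1 t / t) *\<^sub>R \<phi> (t, y))"
      have "((\<lambda>x. A (x,y)) has_integral (P b - P a)) {a..b}"
      proof (rule fundamental_theorem_of_calculus_interior_strong[of "{2}"])
        show "finite {2::real}" by simp
        show "a \<le> b" using ab by simp
        show "continuous_on {a..b} P" unfolding P_def
          using cab2(1) cab2(4) cont_slice(1)[OF cont(2)] cont_slice(1)[OF cont(1)]
          by (intro continuous_on_diff continuous_on_scaleR) auto
        fix x assume x: "x \<in> {a<..<b} - {2}"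
        then have x1: "1 < x" "x \<noteq> 2" using ab by auto
        then have x0: "x \<noteq> 0" by auto
        have d1: "((\<lambda>t. U t / t) has_real_derivative ((U1 x * x - U x * 1) / (x * x))) (at x)"
          by (rule DERIV_divide[OF dU[OF x1] DERIV_ident x0])
        have d2: "((\<lambda>t. U1 t / t) has_real_derivative ((U2 x * x - U1 x * 1) / (x * x))) (at x)"
          by (rule DERIV_divide[OF dU1[OF x1] DERIV_ident x0])
        have "(P has_vector_derivative
            (((U x / x) *\<^sub>R pdx (pdx \<phi>) (x, y) + ((U1 x * x - U x * 1) / (x * x)) *\<^sub>R pdx \<phi> (x, y))
             - ((U1 x / x) *\<^sub>R pdx \<phi> (x, y) + ((U2 x * x - U1 x * 1) / (x * x)) *\<^sub>R \<phi> (x, y)))) (at x)"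
          unfolding P_def
          by (intro has_vector_derivative_diff has_vector_derivative_scaleR d1 d2 der(1) der(2))
        moreover have "((U x / x) *\<^sub>R pdx (pdx \<phi>) (x, y) + ((U1 x * x - U x * 1) / (x * x)) *\<^sub>R pdx \<phi> (x, y))
             - ((U1 x / x) *\<^sub>R pdx \<phi> (x, y) + ((U2 x * x - U1 x * 1) / (x * x)) *\<^sub>R \<phi> (x, y)) = A (x, y)"
          using x0 by (simp add: A_def scaleR_conv_of_real field_simps power2_eq_square)
        ultimately show "(P has_vector_derivative A (x, y)) (at x)" by simp
      qed
      moreover have "P b = 0" "P a = 0" using z[of a y] z[of b y] by (simp_all add: P_def)
      ultimately have "((\<lambda>x. A (x,y)) has_integral 0) {a..b}" by simp
      then show "integral {a..b} (\<lambda>x. A (x,y)) = 0" by (rule integral_unique)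
    qed
    finally show ?thesis by simp
  qed
  have IB: "integral K B = 0"
  proof -
    have "integral K B = integral {a..b} (\<lambda>x. integral {0..2*pi} (\<lambda>y. B (x,y)))"
      using integral_prod_continuous[OF cB[unfolded K_def]] by (simp add: K_def)
    also have "\<dots> = integral {a..b} (\<lambda>x. 0)"
    proof (rule integral_cong)
      fix x :: real
      have "((\<lambda>y. pdy (pdy \<phi>) (x, y)) has_integral (pdy \<phi> (x, 2*pi) - pdy \<phi> (x, 0))) {0..2*pi}"
        by (rule fundamental_theorem_of_calculus) (auto intro: has_vector_derivative_at_within der(4))
      moreover have "pdy \<phi> (x, 2*pi) = pdy \<phi> (x, 0)" using pdy_per[of x 0] by simp
      ultimately have "((\<lambda>y. pdy (pdy \<phi>) (x, y)) has_integral 0) {0..2*pi}" by simp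
      then have "((\<lambda>y. B (x, y)) has_integral (x * U x) *\<^sub>R 0) {0..2*pi}"
        unfolding B_def using has_integral_cmul[of _ 0 _ "x * U x"] by simp
      then show "integral {0..2*pi} (\<lambda>y. B (x,y)) = 0" by (simp add: integral_unique)
    qed
    finally show ?thesis by simp
  qed
  have iH1: "H1 integrable_on K" using cH1 unfolding K_def by (rule integrable_continuous)
  have iH2: "H2 integrable_on K" using cH2 unfolding K_def by (rule integrable_continuous)
  have iA: "A integrable_on K" using cA unfolding K_def by (rule integrable_continuous)
  have iB: "B integrable_on K" using cB unfolding K_def by (rule integrable_continuous)
  have "integral K H1 - integral K H2 = integral K (\<lambda>p. H1 p - H2 p)"
    by (rule integral_diff[OF iH1 iH2, symmetric])
  also have "\<dots> = integral K (\<lambda>p. A p + B p)" by (rule integral_cong) (rule eqAB)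
  also have "\<dots> = 0" using integral_add[OF iA iB] IA IB by simp
  finally show "L2_inner (Delta_ex \<phi>) (\<lambda>p. complex_of_real (U (fst p))) =
        L2_inner \<phi> (\<lambda>p. complex_of_real (W (fst p)))" using I1 I2 by simp
qed




section \<open>The concrete functions\<close>

definition "cutf x = max 0 (2 - (x::real))"
definition "bet = (-27/32::real)"
definition "F1 x = 1 - (x-1) * ln (x-1) / 4 + bet * (x-1)^2 * ln (x-1)"
definition "F1d x = -(ln (x-1) + 1)/4 + bet * (2*(x-1)*ln (x-1) + (x-1))"
definition "F1dd x = -1/(4*(x-1)) + bet*(2*ln (x-1) + 3)"
definition "U1g k x = F1 x * k^3"
definition "U1dg k x = F1d x * k^3 + F1 x * (-3 * k^2)"
definition "U1ddg k x = F1dd x * k^3 + 2 * F1d x * (-3*k^2) + F1 x * (6*k)"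
definition "U2g k (x::real) = (x-1) * k^3"
definition "U2dg k (x::real) = k^3 + (x-1)*(-3*k^2)"
definition "U2ddg k (x::real) = 2*(-3*k^2) + (x-1)*(6*k)"
definition "W1g k x = U1ddg k x - U1dg k x / x + Vp x * U1g k x"
definition "W2g k x = U2ddg k x - U2dg k x / x + Vp x * U2g k x"

lemmas gdefs = bet_def F1_def F1d_def F1dd_def U1g_def U1dg_def U1ddg_def U2g_def U2dg_def U2ddg_def W1g_def W2g_def

definition "U1 x = U1g (cutf x) x"
definition "U1d x = U1dg (cutf x) x"
definition "U1dd x = U1ddg (cutf x) x"
definition "U2 x = U2g (cutf x) x"
definition "U2d x = U2dg (cutf x) x"
definition "U2dd x = U2ddg (cutf x) x"
definition "W1 x = W1g (cutf x) x"
definition "W2 x = W2g (cutf x) x"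

lemmas fdefs = U1_def U1d_def U1dd_def U2_def U2d_def U2dd_def W1_def W2_def

lemma W1_eq: "W1 x = U1dd x - U1d x / x + Vp x * U1 x" by (simp add: fdefs W1g_def)
lemma W2_eq: "W2 x = U2dd x - U2d x / x + Vp x * U2 x" by (simp add: fdefs W2g_def)

lemma cutf_cont: "continuous_on S cutf"
  unfolding cutf_def by (intro continuous_intros)

lemma cutf_ev: "eventually (\<lambda>x. cutf x = 2 - x) (at_right 1)"
proof -
  have "eventually (\<lambda>x. x < (2::real)) (at_right 1)"
    unfolding eventually_at_right_field by (rule exI[of _ 2]) auto
  then show ?thesis by eventually_elim (simp add: cutf_def)
qed

lemma cutf_zero: "2 \<le> x \<Longrightarrow> cutf x = 0" by (simp add: cutf_def)

lemma fun_zero: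
  assumes "2 < x"
  shows "U1 x = 0" "U2 x = 0" "W1 x = 0" "W2 x = 0"
  using cutf_zero[of x] assms by (simp_all add: fdefs gdefs W1g_def)

lemma cutf_deriv:
  assumes "x \<noteq> 2"
  shows "((\<lambda>t. cutf t ^ 3) has_real_derivative (-3 * cutf x ^ 2)) (at x)"
    "((\<lambda>t. -3 * cutf t ^ 2) has_real_derivative (6 * cutf x)) (at x)"
proof -
  have "((\<lambda>t. cutf t ^ 3) has_real_derivative (-3 * cutf x ^ 2)) (at x) \<and>
        ((\<lambda>t. -3 * cutf t ^ 2) has_real_derivative (6 * cutf x)) (at x)"
  proof (cases "x < 2")
    case True
    have e: "cutf t = 2 - t" if "t \<in> {..<2}" for t using that by (simp add: cutf_def)
    have d1: "((\<lambda>t. (2 - t) ^ 3) has_real_derivative (-3 * (2 - x) ^ 2)) (at x)"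
      by (auto intro!: derivative_eq_intros simp: power2_eq_square)
    have d2: "((\<lambda>t. -3 * (2 - t) ^ 2) has_real_derivative (6 * (2 - x))) (at x)"
      by (auto intro!: derivative_eq_intros simp: power2_eq_square)
    show ?thesis
      using has_field_derivative_transform_within_open[OF d1, of "{..<2}"]
        has_field_derivative_transform_within_open[OF d2, of "{..<2}"] True e
      by (simp add: e)
  next
    case False
    then have x2: "2 < x" using assms by simp
    have e: "cutf t = 0" if "t \<in> {2<..}" for t using that by (simp add: cutf_def)
    have d1: "((\<lambda>t. 0) has_real_derivative 0) (at x)" by simp
    show ?thesis
      using has_field_derivative_transform_within_open[OF d1, of "{2<..}" "\<lambda>t. cutf t ^ 3"]
        has_field_derivative_transform_within_open[OF d1, of "{2<..}" "\<lambda>t. -3 * cutf t ^ 2"] x2 e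
      by (simp add: e)
  qed
  then show "((\<lambda>t. cutf t ^ 3) has_real_derivative (-3 * cutf x ^ 2)) (at x)"
    "((\<lambda>t. -3 * cutf t ^ 2) has_real_derivative (6 * cutf x)) (at x)" by auto
qed

lemma F1_deriv:
  assumes "1 < x"
  shows "(F1 has_real_derivative F1d x) (at x)" "(F1d has_real_derivative F1dd x) (at x)"
proof -
  have x: "x - 1 > 0" using assms by auto
  have dg: "((\<lambda>t. t - 1) has_real_derivative 1) (at x)" by (auto intro!: derivative_eq_intros)
  have dl: "((\<lambda>t. ln (t - 1)) has_real_derivative (inverse (x - 1) * 1)) (at x)"
    by (rule DERIV_chain2[where f=ln and g="\<lambda>t. t-1", OF _ dg]) (use DERIV_ln[OF x] in simp)
  have dP: "((\<lambda>t. (t - 1) * ln (t - 1)) has_real_derivative (1 * ln (x - 1) + (inverse (x - 1) * 1) * (x - 1))) (at x)"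
    by (rule DERIV_mult[OF dg dl])
  have dq: "((\<lambda>t. bet * (t - 1)^2) has_real_derivative (bet * (2 * (x - 1)))) (at x)"
    by (auto intro!: derivative_eq_intros)
  have "((\<lambda>t. (1 - (t - 1) * ln (t - 1) / 4) + (bet * (t - 1)^2) * ln (t - 1)) has_real_derivative
       ((0 - (1 * ln (x - 1) + (inverse (x - 1) * 1) * (x - 1)) / 4)
         + ((bet * (2 * (x - 1))) * ln (x - 1) + (inverse (x - 1) * 1) * (bet * (x - 1)^2)))) (at x)"
    by (intro DERIV_add DERIV_diff DERIV_const DERIV_cdivide dP DERIV_mult dq dl)
  then show "(F1 has_real_derivative F1d x) (at x)"
    unfolding F1_def[abs_def] F1d_def
    by (rule DERIV_cong) (use x in \<open>simp add: field_simps power2_eq_square\<close>)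
  have dP2: "((\<lambda>t. 2 * ((t - 1) * ln (t - 1)) + (t - 1)) has_real_derivative
      (2 * (1 * ln (x - 1) + (inverse (x - 1) * 1) * (x - 1)) + 1)) (at x)"
    by (intro DERIV_add DERIV_cmult dP dg)
  have "((\<lambda>t. - (ln (t - 1) + 1) / 4 + bet * (2 * ((t - 1) * ln (t - 1)) + (t - 1))) has_real_derivative
     (- (inverse (x - 1) * 1 + 0) / 4 + bet * (2 * (1 * ln (x - 1) + (inverse (x - 1) * 1) * (x - 1)) + 1))) (at x)"
    by (intro DERIV_add DERIV_minus DERIV_cdivide DERIV_cmult dP2 dl DERIV_const)
  moreover have "F1d = (\<lambda>t. - (ln (t - 1) + 1) / 4 + bet * (2 * ((t - 1) * ln (t - 1)) + (t - 1)))"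
    unfolding F1d_def[abs_def] by (rule ext) (simp only: mult.assoc)
  ultimately show "(F1d has_real_derivative F1dd x) (at x)"
    unfolding F1dd_def
    by (auto elim!: DERIV_cong) (use x in \<open>simp add: field_simps power2_eq_square\<close>)
qed

lemma U_deriv:
  assumes "1 < x" "x \<noteq> 2"
  shows "(U1 has_real_derivative U1d x) (at x)" "(U1d has_real_derivative U1dd x) (at x)"
    "(U2 has_real_derivative U2d x) (at x)" "(U2d has_real_derivative U2dd x) (at x)"
proof -
  note c = cutf_deriv[OF assms(2)] and f = F1_deriv[OF assms(1)]
  have "((\<lambda>t. F1 t * cutf t ^ 3) has_real_derivative (F1d x * cutf x ^ 3 + (-3 * cutf x ^ 2) * F1 x)) (at x)"
    by (rule DERIV_mult[OF f(1) c(1)])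
  then show "(U1 has_real_derivative U1d x) (at x)"
    by (simp add: U1_def[abs_def] U1d_def U1g_def U1dg_def algebra_simps)
  have "((\<lambda>t. F1d t * cutf t ^ 3 + F1 t * (-3 * cutf t ^ 2)) has_real_derivative
        (F1dd x * cutf x ^ 3 + (-3 * cutf x ^ 2) * F1d x) + (F1d x * (-3 * cutf x ^ 2) + (6 * cutf x) * F1 x)) (at x)"
    by (rule DERIV_add[OF DERIV_mult[OF f(2) c(1)] DERIV_mult[OF f(1) c(2)]])
  then show "(U1d has_real_derivative U1dd x) (at x)"
    by (simp add: U1d_def[abs_def] U1dd_def U1dg_def U1ddg_def algebra_simps)
  have "((\<lambda>t. (t - 1) * cutf t ^ 3) has_real_derivative (1 * cutf x ^ 3 + (-3 * cutf x ^ 2) * (x - 1))) (at x)"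
    by (rule DERIV_mult[OF _ c(1)]) (auto intro!: derivative_eq_intros)
  then show "(U2 has_real_derivative U2d x) (at x)"
    by (simp add: U2_def[abs_def] U2d_def U2g_def U2dg_def algebra_simps)
  have "((\<lambda>t. cutf t ^ 3 + (t - 1) * (-3 * cutf t ^ 2)) has_real_derivative
        (-3 * cutf x ^ 2) + (1 * (-3 * cutf x ^ 2) + (6 * cutf x) * (x - 1))) (at x)"
    by (rule DERIV_add[OF c(1) DERIV_mult[OF _ c(2)]]) (auto intro!: derivative_eq_intros)
  then show "(U2d has_real_derivative U2dd x) (at x)"
    by (simp add: U2d_def[abs_def] U2dd_def U2dg_def U2ddg_def algebra_simps)
qed

lemma F_cont: "continuous_on {1<..} F1" "continuous_on {1<..} F1d" "continuous_on {1<..} F1dd"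
proof -
  have ne: "\<forall>x\<in>{1<..}. x - 1 \<noteq> (0::real)" "\<forall>x\<in>{1<..}. 4 * (x - 1) \<noteq> (0::real)"
    "\<forall>x\<in>{(1::real)<..}. (4::real) \<noteq> 0" by auto
  show "continuous_on {1<..} F1" unfolding F1_def[abs_def] using ne by (intro continuous_intros)
  show "continuous_on {1<..} F1d" unfolding F1d_def[abs_def] using ne by (intro continuous_intros)
  show "continuous_on {1<..} F1dd" unfolding F1dd_def[abs_def] using ne by (intro continuous_intros)
qed

lemma U_cont:
  "continuous_on {1<..} U1" "continuous_on {1<..} U1d" "continuous_on {1<..} U1dd"
  "continuous_on {1<..} U2" "continuous_on {1<..} U2d" "continuous_on {1<..} U2dd"
  "continuous_on {1<..} W1" "continuous_on {1<..} W2"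
proof -
  have ne: "\<forall>x\<in>{1<..}. x \<noteq> (0::real)" by auto
  note cc = cutf_cont[of "{1<..}"] and cF = F_cont
  show c1: "continuous_on {1<..} U1" unfolding U1_def[abs_def] U1g_def by (intro continuous_intros cF cc)
  show c2: "continuous_on {1<..} U1d" unfolding U1d_def[abs_def] U1dg_def by (intro continuous_intros cF cc)
  show c3: "continuous_on {1<..} U1dd" unfolding U1dd_def[abs_def] U1ddg_def by (intro continuous_intros cF cc)
  show c4: "continuous_on {1<..} U2" unfolding U2_def[abs_def] U2g_def by (intro continuous_intros cF cc)
  show c5: "continuous_on {1<..} U2d" unfolding U2d_def[abs_def] U2dg_def by (intro continuous_intros cF cc)
  show c6: "continuous_on {1<..} U2dd" unfolding U2dd_def[abs_def] U2ddg_def by (intro continuous_intros cF cc)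
  have "continuous_on {1<..} (\<lambda>x. U1dd x - U1d x / x + Vp x * U1 x)"
    using c1 c2 c3 Vp_cont ne by (intro continuous_intros) auto
  then show "continuous_on {1<..} W1" by (simp add: W1_eq[abs_def])
  have "continuous_on {1<..} (\<lambda>x. U2dd x - U2d x / x + Vp x * U2 x)"
    using c4 c5 c6 Vp_cont ne by (intro continuous_intros) auto
  then show "continuous_on {1<..} W2" by (simp add: W2_eq[abs_def])
qed

lemma U_meas[measurable]:
  "U1 \<in> borel_measurable borel" "U2 \<in> borel_measurable borel"
  "W1 \<in> borel_measurable borel" "W2 \<in> borel_measurable borel"
  unfolding fdefs[abs_def] gdefs cutf_def by measurable

lemma ev_lim:
  assumes "((\<lambda>x. G (2 - x) x) \<longlongrightarrow> l) (at_right 1)"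
  shows "((\<lambda>x. G (cutf x) x) \<longlongrightarrow> l) (at_right 1)"
proof -
  have "eventually (\<lambda>x. G (2 - x) x = G (cutf x) x) (at_right 1)"
    using cutf_ev by eventually_elim simp
  with assms show ?thesis by (rule Lim_transform_eventually)
qed

lemma lims:
  "(U1 \<longlongrightarrow> 1) (at_right 1)" "(U2 \<longlongrightarrow> 0) (at_right 1)"
  "(W1 \<longlongrightarrow> 267/32) (at_right 1)" "(W2 \<longlongrightarrow> -27/4) (at_right 1)"
  "((\<lambda>x. (U1d x * U2 x - U1 x * U2d x) / x) \<longlongrightarrow> -1) (at_right 1)"
  "((\<lambda>x. (W1 x * U2 x - U1 x * W2 x) / x) \<longlongrightarrow> 27/4) (at_right 1)"
proof -
  have "((\<lambda>x. U1g (2-x) x) \<longlongrightarrow> 1) (at_right 1)" unfolding gdefs by real_asymp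
  from ev_lim[where G=U1g, OF this] show "(U1 \<longlongrightarrow> 1) (at_right 1)" by (simp add: U1_def[abs_def])
  have "((\<lambda>x. U2g (2-x) x) \<longlongrightarrow> 0) (at_right 1)" unfolding gdefs by real_asymp
  from ev_lim[where G=U2g, OF this] show "(U2 \<longlongrightarrow> 0) (at_right 1)" by (simp add: U2_def[abs_def])
  have "((\<lambda>x. W1g (2-x) x) \<longlongrightarrow> 267/32) (at_right 1)" unfolding gdefs Vp_def by real_asymp
  from ev_lim[where G=W1g, OF this] show "(W1 \<longlongrightarrow> 267/32) (at_right 1)" by (simp add: W1_def[abs_def])
  have "((\<lambda>x. W2g (2-x) x) \<longlongrightarrow> -27/4) (at_right 1)" unfolding gdefs Vp_def by real_asymp
  from ev_lim[where G=W2g, OF this] show "(W2 \<longlongrightarrow> -27/4) (at_right 1)" by (simp add: W2_def[abs_def])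
  have "((\<lambda>x. (\<lambda>k x. (U1dg k x * U2g k x - U1g k x * U2dg k x) / x) (2-x) x) \<longlongrightarrow> -1) (at_right 1)"
    unfolding gdefs by real_asymp
  from ev_lim[where G="\<lambda>k x. (U1dg k x * U2g k x - U1g k x * U2dg k x) / x", OF this] show "((\<lambda>x. (U1d x * U2 x - U1 x * U2d x) / x) \<longlongrightarrow> -1) (at_right 1)"
    by (simp add: fdefs)
  have "((\<lambda>x. (\<lambda>k x. (W1g k x * U2g k x - U1g k x * W2g k x) / x) (2-x) x) \<longlongrightarrow> 27/4) (at_right 1)"
    unfolding gdefs Vp_def by real_asymp
  from ev_lim[where G="\<lambda>k x. (W1g k x * U2g k x - U1g k x * W2g k x) / x", OF this] show "((\<lambda>x. (W1 x * U2 x - U1 x * W2 x) / x) \<longlongrightarrow> 27/4) (at_right 1)"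
    by (simp add: fdefs)
qed


lemma ext_cont:
  fixes g :: "real \<Rightarrow> real"
  assumes "continuous_on {1<..} g" "(g \<longlongrightarrow> L) (at_right 1)"
  shows "continuous_on {1..2} (\<lambda>x. if x = 1 then L else g x)"
proof (rule continuous_on_IccI)
  let ?h = "\<lambda>x. if x = 1 then L else g x"
  have ev: "eventually (\<lambda>x. g x = ?h x) (at_right 1)"
    by (simp add: eventually_at_filter)
  show "(?h \<longlongrightarrow> ?h 1) (at_right 1)" using Lim_transform_eventually[OF assms(2) ev] by simp
  have ic: "isCont g x" if "1 < x" for x
    using assms(1) that continuous_on_eq_continuous_at[of "{1<..}" g] by auto
  have ic2: "isCont ?h x" if "1 < x" for x
  proof -
    have "eventually (\<lambda>t. t \<in> {1<..}) (nhds x)" using that by (intro eventually_nhds_in_open) auto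
    then have "eventually (\<lambda>t. g t = ?h t) (nhds x)" by eventually_elim auto
    then show ?thesis using ic[OF that] that isCont_cong by fastforce
  qed
  show "(?h \<longlongrightarrow> ?h 2) (at_left 2)"
    using ic2[of 2] by (simp add: isCont_def filterlim_at_split)
  show "(?h \<longlongrightarrow> ?h x) (at x)" if "1 < x" "x < 2" for x
    using ic2[of x] that by (simp add: isCont_def)
qed simp

lemma L2_fun:
  fixes V :: "real \<Rightarrow> real"
  assumes m: "V \<in> borel_measurable borel" and c: "continuous_on {1<..} V"
    and l: "(V \<longlongrightarrow> l) (at_right 1)" and z: "\<And>x. 2 < x \<Longrightarrow> V x = 0"
  shows "L2 (\<lambda>p. complex_of_real (V (fst p)))"
proof -
  define h where "h = (\<lambda>x. if x = 1 then l\<^sup>2 / 1 else (V x)\<^sup>2 / x)"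
  have hc: "continuous_on {1..2} h" unfolding h_def
  proof (rule ext_cont)
    show "continuous_on {1<..} (\<lambda>x. (V x)\<^sup>2 / x)" using c by (intro continuous_intros) auto
    show "((\<lambda>x. (V x)\<^sup>2 / x) \<longlongrightarrow> l\<^sup>2 / 1) (at_right 1)"
      by (intro tendsto_intros l) auto
  qed
  show ?thesis
  proof (rule L2_box[where a=1 and b=2 and H="\<lambda>p. h (fst p)"])
    show "(\<lambda>p::real\<times>real. complex_of_real (V (fst p))) \<in> borel_measurable borel"
      by (rule measurable_compose[OF fst_comp_meas[OF m]]) (intro borel_measurable_continuous_onI continuous_intros)
    show "continuous_on (cbox (1, 0) (2, 2 * pi)) (\<lambda>p. h (fst p))" by (rule fst_comp_cont[OF hc])
    show "(cmod (complex_of_real (V (fst (x, y)))))\<^sup>2 = x * h (fst (x, y))" if "1 < x" for x y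
      using that by (simp add: h_def)
    show "complex_of_real (V (fst (x, y))) = 0" if "1 < x" "\<not> (1 \<le> x \<and> x \<le> 2)" for x y
      using that z by auto
  qed auto
qed

lemma L2s:
  "L2 (\<lambda>p. complex_of_real (U1 (fst p)))" "L2 (\<lambda>p. complex_of_real (U2 (fst p)))"
  "L2 (\<lambda>p. complex_of_real (W1 (fst p)))" "L2 (\<lambda>p. complex_of_real (W2 (fst p)))"
  by (rule L2_fun[OF U_meas(1) U_cont(1) lims(1) fun_zero(1)], assumption)
     (rule L2_fun[OF U_meas(2) U_cont(4) lims(2) fun_zero(2)], assumption,
      rule L2_fun[OF U_meas(3) U_cont(7) lims(3) fun_zero(3)], assumption,
      rule L2_fun[OF U_meas(4) U_cont(8) lims(4) fun_zero(4)], assumption)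

lemma adj1: "((\<lambda>p. complex_of_real (U1 (fst p))), (\<lambda>p. complex_of_real (W1 (fst p)))) \<in> graph_adjoint Delta_ex_graph"
  by (rule adjoint_mem[OF U_cont(1,2,3) U_deriv(1,2) W1_eq L2s(1,3)])

lemma adj2: "((\<lambda>p. complex_of_real (U2 (fst p))), (\<lambda>p. complex_of_real (W2 (fst p)))) \<in> graph_adjoint Delta_ex_graph"
  by (rule adjoint_mem[OF U_cont(4,5,6) U_deriv(3,4) W2_eq L2s(2,4)])


lemma boundary:
  "L2_inner (\<lambda>p. complex_of_real (W1 (fst p))) (\<lambda>p. complex_of_real (U2 (fst p))) \<noteq>
   L2_inner (\<lambda>p. complex_of_real (U1 (fst p))) (\<lambda>p. complex_of_real (W2 (fst p)))"
proof
  let ?u1 = "\<lambda>p::real\<times>real. complex_of_real (U1 (fst p))"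
  let ?u2 = "\<lambda>p::real\<times>real. complex_of_real (U2 (fst p))"
  let ?w1 = "\<lambda>p::real\<times>real. complex_of_real (W1 (fst p))"
  let ?w2 = "\<lambda>p::real\<times>real. complex_of_real (W2 (fst p))"
  assume eq: "L2_inner ?w1 ?u2 = L2_inner ?u1 ?w2"
  have e1: "L2_inner ?w1 ?u2 - L2_inner ?u1 ?w2 = integral\<^sup>L dA (\<lambda>p. ?w1 p * cnj (?u2 p) - ?u1 p * cnj (?w2 p))"
    unfolding L2_inner_def
    by (rule Bochner_Integration.integral_diff[symmetric, OF L2_prod_int[OF L2s(3) L2s(2)] L2_prod_int[OF L2s(1) L2s(4)]])
  define hb where "hb = (\<lambda>x. if x = 1 then 27/4 else (W1 x * U2 x - U1 x * W2 x) / x)"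
  have hbc: "continuous_on {1..2} hb" unfolding hb_def
  proof (rule ext_cont)
    show "continuous_on {1<..} (\<lambda>x. (W1 x * U2 x - U1 x * W2 x) / x)"
      using U_cont by (intro continuous_intros) auto
    show "((\<lambda>x. (W1 x * U2 x - U1 x * W2 x) / x) \<longlongrightarrow> 27 / 4) (at_right 1)" by (rule lims(6))
  qed
  have "integral\<^sup>L dA (\<lambda>p. ?w1 p * cnj (?u2 p) - ?u1 p * cnj (?w2 p)) =
        integral (cbox (1,0) (2,2*pi)) (\<lambda>p. complex_of_real (hb (fst p)))"
  proof (rule box_lemma(2))
    show "(\<lambda>p. ?w1 p * cnj (?u2 p) - ?u1 p * cnj (?w2 p)) \<in> borel_measurable borel"
      using meas_of_L2[OF L2s(1)] meas_of_L2[OF L2s(2)] meas_of_L2[OF L2s(3)] meas_of_L2[OF L2s(4)]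
      by measurable
    show "continuous_on (cbox (1, 0) (2, 2 * pi)) (\<lambda>p. complex_of_real (hb (fst p)))"
      using fst_comp_cont[OF hbc] by (intro continuous_on_of_real)
    show "?w1 (x, y) * cnj (?u2 (x, y)) - ?u1 (x, y) * cnj (?w2 (x, y)) =
        (if 1 \<le> x \<and> x \<le> 2 then x *\<^sub>R complex_of_real (hb (fst (x, y))) else 0)"
      if "1 < x" "0 \<le> y" "y < 2 * pi" for x y
    proof (cases "x \<le> 2")
      case True
      then show ?thesis using that by (simp add: hb_def scaleR_conv_of_real)
    next
      case False
      then show ?thesis using fun_zero[of x] by simp
    qed
  qed auto
  also have "\<dots> = integral {1..2} (\<lambda>x. integral {0..2*pi} (\<lambda>y. complex_of_real (hb x)))"
    using integral_prod_continuous[OF continuous_on_of_real[OF fst_comp_cont[OF hbc, of 0 "2*pi"]]]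
    by simp
  also have "\<dots> = integral {1..2} (\<lambda>x. complex_of_real (2 * pi * hb x))"
    by (simp add: scaleR_conv_of_real)
  also have "\<dots> = complex_of_real (2 * pi * 1)"
  proof -
    define Wb where "Wb = (\<lambda>x. if x = 1 then -1 else (U1d x * U2 x - U1 x * U2d x) / x)"
    have Wbc: "continuous_on {1..2} Wb" unfolding Wb_def
    proof (rule ext_cont)
      show "continuous_on {1<..} (\<lambda>x. (U1d x * U2 x - U1 x * U2d x) / x)"
        using U_cont by (intro continuous_intros) auto
      show "((\<lambda>x. (U1d x * U2 x - U1 x * U2d x) / x) \<longlongrightarrow> -1) (at_right 1)" by (rule lims(5))
    qed
    have "(hb has_integral (Wb 2 - Wb 1)) {1..2}"
    proof (rule fundamental_theorem_of_calculus_interior)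
      show "(1::real) \<le> 2" by simp
      show "continuous_on {1..2} Wb" by (rule Wbc)
      fix x :: real assume x: "x \<in> {1<..<2}"
      then have x1: "1 < x" "x \<noteq> 2" and x0: "x \<noteq> 0" by auto
      note d = U_deriv[OF x1]
      have "((\<lambda>t. (U1d t * U2 t - U1 t * U2d t) / t) has_real_derivative
          (((U1dd x * U2 x + U2d x * U1d x) - (U1d x * U2d x + U2dd x * U1 x)) * x
             - (U1d x * U2 x - U1 x * U2d x) * 1) / (x * x)) (at x)"
        by (rule DERIV_divide[OF DERIV_diff[OF DERIV_mult[OF d(2) d(3)] DERIV_mult[OF d(1) d(4)]] DERIV_ident x0])
      moreover have "(((U1dd x * U2 x + U2d x * U1d x) - (U1d x * U2d x + U2dd x * U1 x)) * x
             - (U1d x * U2 x - U1 x * U2d x) * 1) / (x * x) = hb x"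
        using x0 x1 by (simp add: hb_def W1_eq W2_eq field_simps)
      ultimately have "((\<lambda>t. (U1d t * U2 t - U1 t * U2d t) / t) has_real_derivative hb x) (at x)" by simp
      then have "(Wb has_real_derivative hb x) (at x)"
        by (rule has_field_derivative_transform_within_open[where S="{1<..}"]) (use x1 in \<open>auto simp: Wb_def\<close>)
      then show "(Wb has_vector_derivative hb x) (at x)"
        by (simp add: has_real_derivative_iff_has_vector_derivative)
    qed
    moreover have "Wb 2 = 0" "Wb 1 = -1"
      by (simp_all add: Wb_def fdefs gdefs cutf_def)
    ultimately have "(hb has_integral 1) {1..2}" by simp
    then have "((\<lambda>x. complex_of_real (2 * pi * hb x)) has_integral complex_of_real (2 * pi * 1)) {1..2}"
      by (intro has_integral_of_real has_integral_mult_right)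
    then show ?thesis by (rule integral_unique)
  qed
  finally have e2: "integral\<^sup>L dA (\<lambda>p. ?w1 p * cnj (?u2 p) - ?u1 p * cnj (?w2 p)) = complex_of_real (2 * pi * 1)" .
  from e1 e2 eq show False by simp
qed

theorem proposition4:
  shows "\<not> essentially_self_adjoint Delta_ex_graph"
  by (rule not_esa[OF _ adj1 adj2 boundary]) (rule G_L2)

end
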